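(* If $n$ is a non-negative integer, then $$\sum_{k = 1}^n \sum_{j = 0}^{k - 1} \frac{\binom{n}{j}^2}{k - j} = \binom{2n}{n} \left(2H_n - H_{2n} \right)$$ and $$\sum_{k = 1}^n \sum_{j = 0}^{k - 1} \frac{1}{k - j}\binom{n}{j}\binom{2n}{n + j} = \binom{3n}{n} H_n - \sum_{k = 1}^n \frac{1}{k}\binom{3n - k}{n - k}.$$
   Context: $H_n=\sum_{m=1}^n\frac1m$. Empty sums are zero. *)

theory Defs
  imports "HOL-Analysis.Analysis"
begin

end

theory Submission
  imports Defs
begin

lemma b1: "(m choose Suc s) * Suc s = (m choose s) * (m - s)"
  by (metis binomial_absorb_comp binomial_absorption mult.commute)

lemma HP:
  fixes s t :: nat
  shows "real (Suc (Suc (s+t)) choose Suc s) * (harm (Suc(Suc(s+t))) - harm (Suc t))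
       = real (Suc(s+t) choose Suc s) * (harm (Suc(s+t)) - harm t)
       + real (Suc(s+t) choose s) * (harm (Suc (s+t)) - harm (Suc t))"
proof -
  define a where "a = (Suc(s+t) choose s)"
  define b where "b = (Suc(s+t) choose Suc s)"
  define c where "c = (Suc (Suc (s+t)) choose Suc s)"
  have e1: "c = a + b" unfolding a_def b_def c_def by simp
  have nb: "b * Suc s = a * Suc t"
    using b1[of "Suc(s+t)" s] unfolding a_def b_def by simp
  have nc: "c * Suc s = Suc (Suc (s+t)) * a"
    using Suc_times_binomial[of s "Suc (s+t)"] unfolding a_def c_def by (simp add: mult.commute)
  have "c * Suc t * Suc s = b * Suc (Suc (s+t)) * Suc s"
    by (metis nb nc mult.commute mult.assoc)
  hence nn: "c * Suc t = b * Suc (Suc (s+t))" using mult_right_cancel[of "Suc s"] by (metis Zero_not_Suc)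
  have e2: "real c * (1 / real (Suc (Suc (s+t)))) = real b * (1 / real (Suc t))"
  proof -
    have "real c * real (Suc t) = real b * real (Suc (Suc (s+t)))"
      using nn by (metis of_nat_mult)
    thus ?thesis by (simp add: field_simps)
  qed
  have h1: "harm (Suc(Suc(s+t))) = harm (Suc(s+t)) + 1 / real (Suc (Suc (s+t)))"
    by (simp add: harm_Suc inverse_eq_divide)
  have h2: "harm (Suc t) = harm t + 1 / real (Suc t)"
    by (simp add: harm_Suc inverse_eq_divide)
  have "real c * (harm (Suc(Suc(s+t))) - harm (Suc t))
     = real c * (harm (Suc(s+t)) - harm t) + real c * (1 / real (Suc (Suc (s+t)))) - real c * (1 / real (Suc t))"
    unfolding h1 h2 by (simp add: algebra_simps)
  also have "\<dots> = real b * (harm (Suc(s+t)) - harm t) + real a * (harm (Suc (s+t)) - (harm t + 1 / real (Suc t)))"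
    unfolding e2 by (simp add: e1 algebra_simps add_divide_distrib)
  finally show ?thesis unfolding a_def[symmetric] b_def[symmetric] c_def[symmetric] h2 .
qed


lemma harm0: "harm 0 = (0::real)" by (simp add: harm_def)

lemma lemA:
  fixes n N r :: nat
  assumes "r \<le> n"
  shows "(\<Sum>j\<le>r. real (n choose j) * real (N choose (r-j)) * (harm n - harm (n-j)))
         = real ((n+N) choose r) * (harm (n+N) - harm (n+N-r))"
  using assms
proof (induction N arbitrary: r)
  case 0
  have "(\<Sum>j\<le>r. real (n choose j) * real (0 choose (r-j)) * (harm n - harm (n-j)))
      = (\<Sum>j\<le>r. if j = r then real (n choose j) * (harm n - harm (n-j)) else 0)"
    by (intro sum.cong) auto
  also have "\<dots> = real (n choose r) * (harm n - harm (n-r))" by simp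
  finally show ?case by simp
next
  case (Suc N)
  show ?case
  proof (cases r)
    case 0
    then show ?thesis by simp
  next
    case (Suc r')
    have r'n: "r' \<le> n" "Suc r' \<le> n" using Suc.prems Suc by auto
    define w where "w j = real (n choose j) * (harm n - harm (n-j))" for j
    have "(\<Sum>j\<le>Suc r'. real (n choose j) * real (Suc N choose (Suc r'-j)) * (harm n - harm (n-j)))
        = (\<Sum>j\<le>Suc r'. w j * real (Suc N choose (Suc r'-j)))"
      unfolding w_def by (simp add: algebra_simps)
    also have "\<dots> = (\<Sum>j\<le>r'. w j * real (Suc N choose (Suc r'-j))) + w (Suc r')"
      by simp
    also have "(\<Sum>j\<le>r'. w j * real (Suc N choose (Suc r'-j)))
        = (\<Sum>j\<le>r'. w j * real (N choose (r'-j)) + w j * real (N choose (Suc r' - j)))"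
      by (intro sum.cong) (auto simp: Suc_diff_le algebra_simps)
    also have "\<dots> = (\<Sum>j\<le>r'. w j * real (N choose (r'-j))) + (\<Sum>j\<le>r'. w j * real (N choose (Suc r' - j)))"
      by (rule sum.distrib)
    finally have "(\<Sum>j\<le>Suc r'. real (n choose j) * real (Suc N choose (Suc r'-j)) * (harm n - harm (n-j)))
      = (\<Sum>j\<le>r'. w j * real (N choose (r'-j))) + (\<Sum>j\<le>Suc r'. w j * real (N choose (Suc r' - j)))"
      by simp
    also have "(\<Sum>j\<le>r'. w j * real (N choose (r'-j))) = real ((n+N) choose r') * (harm (n+N) - harm (n+N-r'))"
      using Suc.IH[OF r'n(1)] unfolding w_def by (simp add: algebra_simps)
    also have "(\<Sum>j\<le>Suc r'. w j * real (N choose (Suc r' - j))) = real ((n+N) choose Suc r') * (harm (n+N) - harm (n+N-Suc r'))"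
      using Suc.IH[OF r'n(2)] unfolding w_def by (simp add: algebra_simps)
    finally have L: "(\<Sum>j\<le>r. real (n choose j) * real (Suc N choose (r-j)) * (harm n - harm (n-j)))
      = real ((n+N) choose r') * (harm (n+N) - harm (n+N-r')) + real ((n+N) choose Suc r') * (harm (n+N) - harm (n+N-Suc r'))"
      using Suc by simp
    define t where "t = n + N - Suc r'"
    have nt: "n + N = Suc (r' + t)" "n + Suc N = Suc (Suc (r' + t))" "n+N-r' = Suc t" "n + Suc N - r = Suc t"
      using r'n Suc unfolding t_def by auto
    show ?thesis unfolding L using HP[of r' t] unfolding nt Suc
      by (simp add: algebra_simps)
  qed
qed

lemma lemG:
  fixes n p :: nat
  shows "(\<Sum>k=1..n. (1 / real k) * real ((n+p-k) choose (n-k))) = real ((n+p) choose n) * (harm (n+p) - harm p)"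
proof (induction n arbitrary: p)
  case 0
  then show ?case by simp
next
  case (Suc n)
  note IHn = Suc.IH
  show ?case
  proof (induction p)
    case 0
    have "(\<Sum>k=1..Suc n. (1 / real k) * real ((Suc n+0-k) choose (Suc n-k))) = (\<Sum>k=1..Suc n. inverse (real k))"
      by (intro sum.cong) (auto simp: inverse_eq_divide)
    then show ?case by (simp add: harm_def harm0)
  next
    case (Suc q)
    have "(\<Sum>k=1..Suc n. (1 / real k) * real ((Suc n+Suc q-k) choose (Suc n-k)))
        = (\<Sum>k=1..n. (1 / real k) * real ((Suc n+Suc q-k) choose (Suc n-k))) + 1 / real (Suc n)"
      by simp
    also have "(\<Sum>k=1..n. (1 / real k) * real ((Suc n+Suc q-k) choose (Suc n-k)))
       = (\<Sum>k=1..n. (1 / real k) * real ((n+Suc q-k) choose (n-k)) + (1 / real k) * real ((Suc n+q-k) choose (Suc n-k)))"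
      by (intro sum.cong) (auto simp: Suc_diff_le algebra_simps)
    also have "\<dots> = (\<Sum>k=1..n. (1 / real k) * real ((n+Suc q-k) choose (n-k))) + (\<Sum>k=1..n. (1 / real k) * real ((Suc n+q-k) choose (Suc n-k)))"
      by (rule sum.distrib)
    finally have "(\<Sum>k=1..Suc n. (1 / real k) * real ((Suc n+Suc q-k) choose (Suc n-k)))
       = (\<Sum>k=1..n. (1 / real k) * real ((n+Suc q-k) choose (n-k))) + (\<Sum>k=1..Suc n. (1 / real k) * real ((Suc n+q-k) choose (Suc n-k)))"
      by simp
    also have "\<dots> = real ((n+Suc q) choose n) * (harm (n+Suc q) - harm (Suc q)) + real ((Suc n+q) choose Suc n) * (harm (Suc n+q) - harm q)"
      using Suc.IH IHn[of "Suc q"] by simp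
    also have "\<dots> = real ((Suc n+Suc q) choose Suc n) * (harm (Suc n+Suc q) - harm (Suc q))"
      using HP[of n q] by simp
    finally show ?case .
  qed
qed

lemma lemL:
  fixes a :: "nat \<Rightarrow> real" and n :: nat
  shows "(\<Sum>k=1..n. \<Sum>j=0..k-1. a j / real (k-j)) = (\<Sum>j<n. a j * harm (n-j))"
proof (induction n)
  case 0
  then show ?case by simp
next
  case (Suc n)
  have "(\<Sum>k=1..Suc n. \<Sum>j=0..k-1. a j / real (k-j)) = (\<Sum>k=1..n. \<Sum>j=0..k-1. a j / real (k-j)) + (\<Sum>j\<le>n. a j / real (Suc n-j))"
    by (simp add: atLeast0AtMost)
  also have "\<dots> = (\<Sum>j<n. a j * harm (n-j)) + (\<Sum>j<n. a j / real (Suc n-j)) + a n"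
    using Suc.IH by (simp add: lessThan_Suc_atMost[symmetric])
  also have "\<dots> = (\<Sum>j<n. a j * harm (n-j) + a j / real (Suc n-j)) + a n"
    by (simp add: sum.distrib)
  also have "(\<Sum>j<n. a j * harm (n-j) + a j / real (Suc n-j)) = (\<Sum>j<n. a j * harm (Suc n-j))"
    by (intro sum.cong) (auto simp: Suc_diff_le harm_Suc algebra_simps inverse_eq_divide)
  finally show ?case by (simp add: harm_Suc harm0)
qed


theorem proposition17:
  fixes n :: nat
  shows "((\<Sum>k=1..n. \<Sum>j=0..k-1. real ((n choose j)^2) / real (k - j))
           = real ((2*n) choose n) * (2 * harm n - harm (2*n))) \<and>
         ((\<Sum>k=1..n. \<Sum>j=0..k-1. (1 / real (k - j)) * real (n choose j) * real ((2*n) choose (n+j)))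
           = real ((3*n) choose n) * harm n - (\<Sum>k=1..n. (1 / real k) * real ((3*n - k) choose (n - k))))"
proof
  have s1: "(\<Sum>k=1..n. \<Sum>j=0..k-1. real ((n choose j)^2) / real (k - j)) = (\<Sum>j\<le>n. real ((n choose j)^2) * harm (n-j))"
    using lemL[of "\<lambda>j. real ((n choose j)^2)" n] by (simp add: lessThan_Suc_atMost[symmetric] harm0)
  have A: "(\<Sum>j\<le>n. real ((n choose j)^2) * (harm n - harm (n-j))) = real ((2*n) choose n) * (harm (2*n) - harm n)"
  proof -
    have "(\<Sum>j\<le>n. real ((n choose j)^2) * (harm n - harm (n-j))) = (\<Sum>j\<le>n. real (n choose j) * real (n choose (n-j)) * (harm n - harm (n-j)))"
      by (intro sum.cong) (auto simp: binomial_symmetric[symmetric] power2_eq_square)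
    also have "\<dots> = real ((n+n) choose n) * (harm (n+n) - harm (n+n-n))"
      by (rule lemA) simp
    finally show ?thesis by (simp add: mult_2)
  qed
  have V: "(\<Sum>j\<le>n. real ((n choose j)^2)) = real ((2*n) choose n)"
    by (metis choose_square_sum of_nat_sum)
  have "(\<Sum>j\<le>n. real ((n choose j)^2) * harm (n-j)) = (\<Sum>j\<le>n. real ((n choose j)^2)) * harm n - (\<Sum>j\<le>n. real ((n choose j)^2) * (harm n - harm (n-j)))"
    by (simp add: right_diff_distrib sum_subtractf sum_distrib_right)
  also have "\<dots> = real ((2*n) choose n) * (2 * harm n - harm (2*n))"
    unfolding A V by (simp add: algebra_simps)
  finally show "(\<Sum>k=1..n. \<Sum>j=0..k-1. real ((n choose j)^2) / real (k - j))
           = real ((2*n) choose n) * (2 * harm n - harm (2*n))" using s1 by simp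
next
  have s1: "(\<Sum>k=1..n. \<Sum>j=0..k-1. (1 / real (k - j)) * real (n choose j) * real ((2*n) choose (n+j)))
     = (\<Sum>j\<le>n. real (n choose j) * real ((2*n) choose (n-j)) * harm (n-j))"
  proof -
    have "(\<Sum>k=1..n. \<Sum>j=0..k-1. (1 / real (k - j)) * real (n choose j) * real ((2*n) choose (n+j)))
      = (\<Sum>k=1..n. \<Sum>j=0..k-1. real (n choose j) * real ((2*n) choose (n+j)) / real (k - j))"
      by simp
    also have "\<dots> = (\<Sum>j<n. real (n choose j) * real ((2*n) choose (n+j)) * harm (n-j))"
      by (rule lemL)
    also have "\<dots> = (\<Sum>j\<le>n. real (n choose j) * real ((2*n) choose (n+j)) * harm (n-j))"
      by (simp add: lessThan_Suc_atMost[symmetric] harm0)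
    also have "\<dots> = (\<Sum>j\<le>n. real (n choose j) * real ((2*n) choose (n-j)) * harm (n-j))"
    proof (intro sum.cong refl)
      fix j assume "j \<in> {..n}"
      hence "(2*n) choose (n-j) = (2*n) choose (2*n - (n-j))" by (intro binomial_symmetric) auto
      also have "2*n - (n-j) = n + j" using \<open>j \<in> {..n}\<close> by auto
      finally show "real (n choose j) * real ((2*n) choose (n+j)) * harm (n-j) = real (n choose j) * real ((2*n) choose (n-j)) * harm (n-j)"
        by simp
    qed
    finally show ?thesis .
  qed
  have A: "(\<Sum>j\<le>n. real (n choose j) * real ((2*n) choose (n-j)) * (harm n - harm (n-j))) = real ((3*n) choose n) * (harm (3*n) - harm (2*n))"
  proof -
    have "(\<Sum>j\<le>n. real (n choose j) * real ((2*n) choose (n-j)) * (harm n - harm (n-j))) = real ((n+2*n) choose n) * (harm (n+2*n) - harm (n+2*n-n))"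
      by (rule lemA) simp
    moreover have "n + 2*n = 3*n" by simp
    ultimately show ?thesis by simp
  qed
  have V: "(\<Sum>j\<le>n. real (n choose j) * real ((2*n) choose (n-j))) = real ((3*n) choose n)"
  proof -
    have "(\<Sum>j\<le>n. (n choose j) * ((2*n) choose (n-j))) = (n + 2*n) choose n" by (rule vandermonde)
    moreover have "n + 2*n = 3*n" by simp
    ultimately have "real (\<Sum>j\<le>n. (n choose j) * ((2*n) choose (n-j))) = real ((3*n) choose n)" by simp
    thus ?thesis by simp
  qed
  have G: "(\<Sum>k=1..n. (1 / real k) * real ((3*n - k) choose (n - k))) = real ((3*n) choose n) * (harm (3*n) - harm (2*n))"
  proof -
    have e: "n + 2*n = 3*n" by simp
    show ?thesis using lemG[of n "2*n"] unfolding e .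
  qed
  have "(\<Sum>j\<le>n. real (n choose j) * real ((2*n) choose (n-j)) * harm (n-j))
     = (\<Sum>j\<le>n. real (n choose j) * real ((2*n) choose (n-j))) * harm n - (\<Sum>j\<le>n. real (n choose j) * real ((2*n) choose (n-j)) * (harm n - harm (n-j)))"
    by (simp add: right_diff_distrib sum_subtractf sum_distrib_right)
  also have "\<dots> = real ((3*n) choose n) * harm n - (\<Sum>k=1..n. (1 / real k) * real ((3*n - k) choose (n - k)))"
    unfolding A V G ..
  finally show "(\<Sum>k=1..n. \<Sum>j=0..k-1. (1 / real (k - j)) * real (n choose j) * real ((2*n) choose (n+j)))
           = real ((3*n) choose n) * harm n - (\<Sum>k=1..n. (1 / real k) * real ((3*n - k) choose (n - k)))"
    using s1 by simp
qed

end
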